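(* There is an absolute constant $K$ such that for every integer $c \ge 0$ there is a deterministic finite automaton over the alphabet $\{0,1\}\times\{0,1\}$, reading its input most significant digit first, with at most $K\max(1,\log c)$ states (not counting a dead state), which accepts a word $x \times y$ (with $x,y$ valid Fibonacci representations of the same length) if and only if $[x] - c = [y]$.
   Context: Fibonacci numbers: $F_0=0$, $F_1=1$, $F_k=F_{k-1}+F_{k-2}$. For a binary word $x = x_1\cdots x_\ell$, $[x] = \sum_{j=1}^{\ell} x_j F_{\ell-j+2}$. A valid Fibonacci representation is a binary word with no factor $11$; leading zeros are allowed. For words $x,y$ of equal length, $x\times y$ denotes the word over $\{0,1\}^2$ whose first component is $x$ and second is $y$ (shorter representation padded with leading zeros). A dead state is not counted. *)

theory Defs
  imports Complex_Main "HOL-Number_Theory.Fib"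
begin

text \<open>Binary words are bool lists; the first letter is the most significant digit.
  The value of x_1...x_l is the sum of x_j F_{l-j+2} (1-indexed), i.e. with
  0-indexed position j the weight is F_{l-j+1}.\<close>

definition fibval :: "bool list \<Rightarrow> nat" where
  "fibval x = (\<Sum>j<length x. of_bool (x ! j) * fib (length x - j + 1))"

definition valid_fib :: "bool list \<Rightarrow> bool" where
  "valid_fib x \<longleftrightarrow> (\<forall>j. Suc j < length x \<longrightarrow> \<not> (x ! j \<and> x ! Suc j))"

text \<open>Deterministic finite automata over the alphabet {0,1} x {0,1}, with a partial
  transition function; a missing transition (None) means going to the (uncounted)
  dead state.\<close>
record dfa =
  states :: "nat set"
  init   :: nat
  trans  :: "nat \<Rightarrow> bool \<times> bool \<Rightarrow> nat option"
  final  :: "nat set"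

definition wf_dfa :: "dfa \<Rightarrow> bool" where
  "wf_dfa A \<longleftrightarrow> finite (states A) \<and> init A \<in> states A \<and> final A \<subseteq> states A \<and>
     (\<forall>q\<in>states A. \<forall>a. \<forall>q'. trans A q a = Some q' \<longrightarrow> q' \<in> states A)"

fun run :: "dfa \<Rightarrow> nat \<Rightarrow> (bool \<times> bool) list \<Rightarrow> nat option" where
  "run A q [] = Some q"
| "run A q (a # w) = (case trans A q a of None \<Rightarrow> None | Some q' \<Rightarrow> run A q' w)"

definition accepts :: "dfa \<Rightarrow> (bool \<times> bool) list \<Rightarrow> bool" where
  "accepts A w \<longleftrightarrow> (\<exists>q. run A (init A) w = Some q \<and> q \<in> final A)"

end

theory Submission imports Defs "HOL-Library.Nat_Bijection" begin

definition fsh :: "bool list \<Rightarrow> nat" where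
  "fsh x = (\<Sum>j<length x. of_bool (x ! j) * fib (length x - j))"

lemma fibval_Nil[simp]: "fibval [] = 0" and fsh_Nil[simp]: "fsh [] = 0"
  by (simp_all add: fibval_def fsh_def)

lemma fibval_snoc: "fibval (x @ [e]) = fibval x + fsh x + of_bool e"
proof -
  have "fibval (x@[e]) = (\<Sum>j<length x. of_bool (x!j) * fib (Suc (Suc (length x - j)))) + of_bool e"
    unfolding fibval_def
    by (auto simp: nth_append Suc_diff_le intro!: sum.cong)
  also have "\<dots> = fibval x + fsh x + of_bool e"
    by (simp add: fibval_def fsh_def sum.distrib distrib_left)
  finally show ?thesis .
qed

lemma fsh_snoc: "fsh (x @ [e]) = fibval x + of_bool e"
  unfolding fibval_def fsh_def
  by (auto simp: nth_append Suc_diff_le intro!: sum.cong)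

lemma fibval_Cons: "fibval (e # x) = of_bool e * fib (length x + 2) + fibval x"
  unfolding fibval_def length_Cons sum.lessThan_Suc_shift
  by (simp del: of_bool_eq add: Suc_diff_le)

lemma fsh_Cons: "fsh (e # x) = of_bool e * fib (length x + 1) + fsh x"
  unfolding fsh_def length_Cons sum.lessThan_Suc_shift
  by (simp del: of_bool_eq add: Suc_diff_le)

lemma fibval_append:
  "fibval (p @ w) = fibval p * fib (length w + 1) + fsh p * fib (length w) + fibval w"
proof (induction p)
  case Nil then show ?case by simp
next
  case (Cons e p)
  have f: "fib (Suc (Suc (length p + length w))) = fib (length w) * fib (Suc (length p)) + fib (Suc (length w)) * fib (Suc (Suc (length p)))"
    using fib_add[of "length w" "Suc (length p)"] by (simp del: fib.simps add: algebra_simps)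
  show ?case using Cons by (simp del: fib.simps add: fibval_Cons fsh_Cons f algebra_simps)
qed

lemma valid_fib_Cons: "valid_fib (b # w) \<Longrightarrow> valid_fib w"
  unfolding valid_fib_def by (metis Suc_less_eq length_Cons nth_Cons_Suc)

lemma fibval_bound: "valid_fib w \<Longrightarrow> fibval w < fib (length w + 2)"
proof (induction "length w" arbitrary: w rule: less_induct)
  case less
  show ?case
  proof (cases w)
    case Nil then show ?thesis by simp
  next
    case (Cons b w1)
    have v1: "valid_fib w1" using less.prems Cons valid_fib_Cons by blast
    have ih1: "fibval w1 < fib (length w1 + 2)" using less.hyps[OF _ v1] Cons by simp
    show ?thesis
    proof (cases b)
      case False
      then show ?thesis using Cons ih1 fib_mono[of "length w1 + 2" "length w1 + 3"] by (simp add: fibval_Cons)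
    next
      case True
      show ?thesis
      proof (cases w1)
        case Nil then show ?thesis using Cons True by (simp add: fibval_Cons numeral_eq_Suc)
      next
        case (Cons b2 w2)
        have "\<not> b2" using less.prems \<open>w = b # w1\<close> Cons True unfolding valid_fib_def by force
        have v2: "valid_fib w2" using v1 Cons valid_fib_Cons by blast
        have ih2: "fibval w2 < fib (length w2 + 2)" using less.hyps[OF _ v2] Cons \<open>w = b # w1\<close> by simp
        show ?thesis using \<open>w = b # w1\<close> Cons True \<open>\<not> b2\<close> ih2 by (simp add: fibval_Cons numeral_eq_Suc)
      qed
    qed
  qed
qed


definition phi :: real where "phi = (1 + sqrt 5) / 2"

lemma phi_sq: "phi * phi = phi + 1"
proof -
  have s: "sqrt 5 * sqrt 5 = (5::real)" by simp
  show ?thesis unfolding phi_def by (simp add: field_simps s algebra_simps)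
qed

lemma phi_sq': "phi * (phi * x) = phi * x + x"
  using phi_sq by (metis distrib_right mult.assoc mult_1)

lemma phi_lb: "1.6 < phi" and phi_ub: "phi < 1.7"
proof -
  have "2.2 < sqrt 5" by (rule real_less_rsqrt) (simp add: power2_eq_square)
  moreover have "sqrt 5 < 2.4" 
    by (rule power_less_imp_less_base[of _ 2]) (auto simp: power2_eq_square)
  ultimately show "1.6 < phi" "phi < 1.7" unfolding phi_def by auto
qed

lemma E_bound: "\<bar>real (fibval p) - phi * real (fsh p)\<bar> < phi"
proof (induction p rule: rev_induct)
  case Nil then show ?case using phi_lb by simp
next
  case (snoc e p)
  define E where "E = real (fibval p) - phi * real (fsh p)"
  have eq: "real (fibval (p @ [e])) - phi * real (fsh (p @ [e])) = (1 - phi) * (E + of_bool e)"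
    unfolding E_def fibval_snoc fsh_snoc by (simp add: algebra_simps phi_sq')
  have "\<bar>(1 - phi) * (E + of_bool e)\<bar> = (phi - 1) * \<bar>E + of_bool e\<bar>"
    using phi_lb by (simp add: abs_mult)
  also have "\<dots> \<le> (phi - 1) * (\<bar>E\<bar> + 1)"
    using phi_lb by (intro mult_left_mono) (auto simp: abs_triangle_ineq[THEN order_trans])
  also have "\<dots> < (phi - 1) * (phi + 1)"
    using phi_lb snoc.IH unfolding E_def by (intro mult_strict_left_mono) auto
  also have "\<dots> = phi" by (simp add: algebra_simps phi_sq)
  finally show ?case using eq by simp
qed

lemma phi_pow: "phi ^ Suc n = phi * fib (Suc n) + fib n"
proof (induction n)
  case 0 then show ?case by simp
next
  case (Suc n)
  have "phi ^ Suc (Suc n) = phi * (phi * fib (Suc n) + fib n)" using Suc by simp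
  also have "\<dots> = (phi * phi) * fib (Suc n) + phi * fib n" by (simp add: algebra_simps)
  also have "\<dots> = phi * fib (Suc (Suc n)) + fib (Suc n)" by (simp add: algebra_simps phi_sq')
  finally show ?case .
qed

lemma fib_le_phi_aux: "real (fib (Suc n)) \<le> phi ^ n \<and> real (fib (Suc (Suc n))) \<le> phi ^ Suc n"
proof (induction n)
  case 0 then show ?case using phi_lb by simp
next
  case (Suc n)
  have "real (fib (Suc (Suc (Suc n)))) = fib (Suc (Suc n)) + fib (Suc n)" by simp
  also have "\<dots> \<le> phi ^ Suc n + phi ^ n" using Suc by simp
  also have "\<dots> = phi ^ n * (phi + 1)" by (simp add: algebra_simps)
  also have "\<dots> = phi ^ Suc (Suc n)" by (simp add: algebra_simps phi_sq')
  finally show ?case using Suc by simp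
qed

lemma fib_le_phi: "real (fib (Suc n)) \<le> phi ^ n"
  using fib_le_phi_aux by blast

lemma fib_le_phi': "real (fib n) \<le> phi ^ n"
proof -
  have "real (fib n) \<le> fib (Suc n)" using fib_Suc_mono[of n] by simp
  also have "\<dots> \<le> phi ^ n" by (rule fib_le_phi)
  finally show ?thesis .
qed

lemma box_bound:
  fixes a u :: int and c :: real
  assumes h1: "\<bar>a - phi * u\<bar> < 2 * phi"
    and h2: "\<bar>c - (a * fib (m + 1) + u * fib m)\<bar> < fib (m + 2)"
  shows "\<bar>c / phi ^ m - a\<bar> < 4" and "\<bar>c / phi ^ (m + 1) - u\<bar> < 5"
proof -
  have pp: "phi > 0" using phi_lb by simp
  have pm: "phi ^ m > 0" using pp by simp
  have key: "phi * c - a * phi ^ (m + 1) = phi * (c - (a * fib (m + 1) + u * fib m)) + fib m * (phi * u - a)"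
    using phi_pow[of m] by (simp add: algebra_simps)
  have "\<bar>phi * c - a * phi ^ (m + 1)\<bar> \<le> phi * \<bar>c - (a * fib (m + 1) + u * fib m)\<bar> + fib m * \<bar>phi * u - a\<bar>"
    unfolding key using pp by (simp add: abs_mult abs_triangle_ineq[THEN order_trans])
  also have "\<dots> < phi * fib (m + 2) + fib m * (2 * phi)"
  proof -
    have "phi * \<bar>c - (a * fib (m + 1) + u * fib m)\<bar> < phi * fib (m + 2)"
      using h2 pp by simp
    moreover have "fib m * \<bar>phi * u - a\<bar> \<le> fib m * (2 * phi)"
      using h1 abs_minus_commute[of a "phi * u"] by (intro mult_left_mono) auto
    ultimately show ?thesis by linarith
  qed
  also have "\<dots> \<le> phi * phi ^ (m + 1) + phi ^ m * (2 * phi)"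
  proof -
    have "real (fib (m + 2)) \<le> phi ^ (m + 1)" using fib_le_phi[of "m + 1"] by simp
    then have "phi * fib (m + 2) \<le> phi * phi ^ (m + 1)" using pp by simp
    moreover have "fib m * (2 * phi) \<le> phi ^ m * (2 * phi)"
      using fib_le_phi'[of m] pp by (intro mult_right_mono) auto
    ultimately show ?thesis by linarith
  qed
  also have "\<dots> = phi ^ (m + 1) * (phi + 2)" by (simp add: algebra_simps)
  finally have A: "\<bar>phi * c - a * phi ^ (m + 1)\<bar> < phi ^ (m + 1) * (phi + 2)" .
  have "phi * c - a * phi ^ (m + 1) = phi ^ (m + 1) * (c / phi ^ m - a)"
    using pm by (simp add: field_simps)
  with A have "phi ^ (m + 1) * \<bar>c / phi ^ m - a\<bar> < phi ^ (m + 1) * (phi + 2)"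
    using pp by (simp add: abs_mult)
  then have B: "\<bar>c / phi ^ m - a\<bar> < phi + 2"
    using pp by (simp add: mult_less_cancel_left_pos)
  then show "\<bar>c / phi ^ m - a\<bar> < 4" using phi_ub by simp
  have "c / phi ^ (m + 1) - u = (c / phi ^ m - a) / phi + (a - phi * u) / phi"
    using pp pm by (simp add: field_simps)
  then have "\<bar>c / phi ^ (m + 1) - u\<bar> \<le> \<bar>c / phi ^ m - a\<bar> / phi + \<bar>a - phi * u\<bar> / phi"
    using pp by (simp add: abs_triangle_ineq[THEN order_trans])
  also have "\<dots> < (phi + 2) / phi + 2 * phi / phi"
  proof -
    have "\<bar>c / phi ^ m - a\<bar> / phi < (phi + 2) / phi" using B pp by (rule divide_strict_right_mono)
    moreover have "\<bar>a - phi * u\<bar> / phi < 2 * phi / phi" using h1 pp by (rule divide_strict_right_mono)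
    ultimately show ?thesis by linarith
  qed
  also have "\<dots> = 1 + 2 / phi + 2" using pp by (simp add: field_simps)
  also have "\<dots> < 5" using phi_lb by (simp add: field_simps)
  finally show "\<bar>c / phi ^ (m + 1) - u\<bar> < 5" .
qed


definition fl :: "nat \<Rightarrow> nat \<Rightarrow> int" where
  "fl c m = \<lfloor>real c / phi ^ m\<rfloor>"

definition box :: "nat \<Rightarrow> nat \<Rightarrow> (int \<times> int) set" where
  "box c m = {fl c m - 4 .. fl c m + 4} \<times> {fl c (m + 1) - 5 .. fl c (m + 1) + 5}"

definition Mc :: "nat \<Rightarrow> nat" where
  "Mc c = nat \<lceil>3 * ln (real c + 1)\<rceil>"

definition TT :: "nat \<Rightarrow> (int \<times> int) set" where
  "TT c = (\<Union>m\<in>{..Mc c}. box c m)"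

definition enc :: "int \<times> int \<Rightarrow> nat" where
  "enc s = prod_encode (int_encode (fst s), int_encode (snd s))"

definition dec :: "nat \<Rightarrow> int \<times> int" where
  "dec n = (int_decode (fst (prod_decode n)), int_decode (snd (prod_decode n)))"

lemma dec_enc[simp]: "dec (enc s) = s"
  by (simp add: enc_def dec_def)

lemma inj_enc: "inj enc"
  by (metis dec_enc injI)

definition step :: "int \<times> int \<Rightarrow> bool \<times> bool \<Rightarrow> int \<times> int" where
  "step s ab = (fst s + snd s + (of_bool (fst ab) - of_bool (snd ab)), fst s + (of_bool (fst ab) - of_bool (snd ab)))"

definition aut :: "nat \<Rightarrow> dfa" where
  "aut c = \<lparr> states = enc ` TT c, init = enc (0, 0),
     trans = (\<lambda>q ab. if step (dec q) ab \<in> TT c then Some (enc (step (dec q) ab)) else None),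
     final = enc ` {s \<in> TT c. fst s = int c} \<rparr>"

fun okp :: "nat \<Rightarrow> int \<times> int \<Rightarrow> (bool \<times> bool) list \<Rightarrow> bool" where
  "okp c s [] = True"
| "okp c s (ab # w) = (step s ab \<in> TT c \<and> okp c (step s ab) w)"

lemma run_aut: "run (aut c) (enc s) w = (if okp c s w then Some (enc (foldl step s w)) else None)"
  by (induction w arbitrary: s) (auto simp: aut_def)

lemma okp_intro: "(\<And>i. i \<le> length w \<Longrightarrow> foldl step s (take i w) \<in> TT c) \<Longrightarrow> okp c s w"
proof (induction w arbitrary: s)
  case Nil then show ?case by simp
next
  case (Cons ab w)
  have 1: "step s ab \<in> TT c" using Cons.prems[of 1] by simp
  have "okp c (step s ab) w"
    using Cons.IH[of "step s ab"] Cons.prems by (metis Suc_le_mono foldl_Cons length_Cons take_Suc_Cons)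
  then show ?case using 1 by simp
qed

lemma okp_prefix: "okp c s w \<Longrightarrow> s \<in> TT c \<Longrightarrow> foldl step s w \<in> TT c"
  by (induction w arbitrary: s) auto

lemma foldl_step:
  "length p = length q \<Longrightarrow>
   foldl step (0, 0) (zip p q) = (int (fibval p) - int (fibval q), int (fsh p) - int (fsh q))"
proof (induction p arbitrary: q rule: rev_induct)
  case Nil then show ?case by simp
next
  case (snoc e p)
  obtain q' f where q: "q = q' @ [f]" using snoc.prems
    by (metis length_append_singleton nat.distinct(1) list.size(3) rev_exhaust)
  have l: "length p = length q'" using snoc.prems q by simp
  show ?case using snoc.IH[OF l] l q
    by (simp add: step_def fibval_snoc fsh_snoc)
qed


lemma exp_third_lt_phi: "exp (1/3) < phi"
proof -
  have "exp (1/3::real) ^ 3 = exp (of_nat 3 * (1/3))" by (rule exp_of_nat_mult[symmetric])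
  also have "\<dots> = exp 1" by simp
  also have "\<dots> \<le> 3" by (rule exp_le)
  also have "(3::real) < 1.6 ^ 3" by (simp add: power3_eq_cube)
  also have "\<dots> < phi ^ 3" using phi_lb by (intro power_strict_mono) auto
  finally show ?thesis
    by (rule power_less_imp_less_base) (use phi_lb in auto)
qed

lemma phi_pow_Mc: "real c + 1 \<le> phi ^ Mc c"
proof -
  have M: "3 * ln (real c + 1) \<le> real (Mc c)"
    unfolding Mc_def by linarith
  have "real c + 1 = exp (ln (real c + 1))" by simp
  also have "\<dots> \<le> exp (of_nat (Mc c) * (1/3))"
  proof -
    have "ln (real c + 1) \<le> of_nat (Mc c) * (1/3)" using M by simp
    then show ?thesis by (simp only: exp_le_cancel_iff)
  qed
  also have "\<dots> = exp (1/3) ^ Mc c" by (rule exp_of_nat_mult)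
  also have "\<dots> \<le> phi ^ Mc c" using exp_third_lt_phi by (intro power_mono) auto
  finally show ?thesis .
qed

lemma fl_big: assumes "Mc c \<le> m" shows "fl c m = 0"
proof -
  have "phi ^ Mc c \<le> phi ^ m" using assms phi_lb by (intro power_increasing) auto
  then have "real c < phi ^ m" using phi_pow_Mc[of c] by linarith
  moreover have "phi ^ m > 0" using phi_lb by simp
  ultimately show ?thesis unfolding fl_def floor_eq_iff by (simp add: field_simps)
qed

lemma box_big: "Mc c \<le> m \<Longrightarrow> box c m = box c (Mc c)"
  unfolding box_def using fl_big[of c m] fl_big[of c "Mc c"] fl_big[of c "m + 1"] fl_big[of c "Mc c + 1"]
  by simp

lemma box_TT: "(a, u) \<in> box c m \<Longrightarrow> (a, u) \<in> TT c"
  unfolding TT_def using box_big[of c m]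
  by (cases "m \<le> Mc c") auto

lemma floor_near:
  fixes r :: real and a k :: int
  assumes "\<bar>r - a\<bar> < k"
  shows "\<lfloor>r\<rfloor> - k \<le> a \<and> a \<le> \<lfloor>r\<rfloor> + k"
proof -
  have "a - k \<le> \<lfloor>r\<rfloor>" unfolding le_floor_iff using assms by simp
  moreover have "\<lfloor>r\<rfloor> < a + k" unfolding floor_less_iff using assms by simp
  ultimately show ?thesis by simp
qed

lemma in_TT:
  assumes "\<bar>real c / phi ^ m - a\<bar> < 4" "\<bar>real c / phi ^ (m + 1) - u\<bar> < 5"
  shows "(a, u) \<in> TT c"
proof -
  have "(a, u) \<in> box c m"
    unfolding box_def fl_def using floor_near[of _ a 4] floor_near[of _ u 5] assms
    by auto
  then show ?thesis by (rule box_TT)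
qed

lemma zero_TT: "(0, 0) \<in> TT c"
  by (rule box_TT[of _ _ _ "Mc c"]) (simp add: box_def fl_big)

lemma finite_TT: "finite (TT c)"
  unfolding TT_def box_def by auto

lemma card_TT: "card (TT c) \<le> 99 * (Mc c + 1)"
proof -
  have "card (TT c) \<le> (\<Sum>m\<in>{..Mc c}. card (box c m))"
    unfolding TT_def by (rule card_UN_le) simp
  also have "\<dots> = (\<Sum>m\<in>{..Mc c}. 99)"
    by (intro sum.cong) (auto simp: box_def card_cartesian_product)
  also have "\<dots> = 99 * (Mc c + 1)" by simp
  finally show ?thesis .
qed

lemma Mc_bound: "real (99 * (Mc c + 1)) \<le> 800 * max 1 (ln (real c))"
proof -
  have M: "real (Mc c) \<le> 3 * ln (real c + 1) + 1"
  proof -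
    have "0 \<le> ln (real c + 1)" by simp
    then have "- 1 < 3 * ln (real c + 1)" by linarith
    then have "0 \<le> \<lceil>3 * ln (real c + 1)\<rceil>" by (simp only: zero_le_ceiling)
    then have "real (Mc c) = of_int \<lceil>3 * ln (real c + 1)\<rceil>" unfolding Mc_def by simp
    then show ?thesis using ceiling_correct[of "3 * ln (real c + 1)"] by linarith
  qed
  have L: "ln (real c + 1) \<le> 2 * max 1 (ln (real c))"
  proof (cases "c = 0")
    case True then show ?thesis by simp
  next
    case False
    then have "real c + 1 \<le> 2 * real c" by simp
    then have "ln (real c + 1) \<le> ln (2 * real c)" using False by simp
    also have "\<dots> = ln 2 + ln (real c)" using False by (simp add: ln_mult_pos)
    also have "ln (2::real) \<le> 1" using ln_le_minus_one[of 2] by simp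
    then have "ln 2 + ln (real c) \<le> 2 * max 1 (ln (real c))" by linarith
    finally show ?thesis .
  qed
  have "real (99 * (Mc c + 1)) = 99 * (real (Mc c) + 1)" by simp
  also have "\<dots> \<le> 99 * (3 * ln (real c + 1) + 2)" using M by simp
  also have "\<dots> \<le> 99 * (6 * max 1 (ln (real c)) + 2)" using L by simp
  also have "\<dots> \<le> 800 * max 1 (ln (real c))" by simp
  finally show ?thesis .
qed


lemma valid_drop: "valid_fib x \<Longrightarrow> valid_fib (drop k x)"
  unfolding valid_fib_def by (auto simp: add.commute)

lemma prefix_in_TT:
  assumes vx: "valid_fib x" and vy: "valid_fib y" and len: "length x = length y"
    and eq: "int (fibval x) - int c = int (fibval y)" and k: "k \<le> length x"
  shows "foldl step (0, 0) (take k (zip x y)) \<in> TT c"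
proof -
  define p q w w' where "p = take k x" "q = take k y" "w = drop k x" "w' = drop k y"
  define m where "m = length x - k"
  have lpq: "length p = length q" using len k unfolding p_q_w_w'_def by simp
  have lw: "length w = m" "length w' = m" using len k unfolding p_q_w_w'_def m_def by auto
  have st: "foldl step (0, 0) (take k (zip x y)) = (int (fibval p) - int (fibval q), int (fsh p) - int (fsh q))"
    unfolding p_q_w_w'_def take_zip by (rule foldl_step) (use len in simp)
  define a where "a = int (fibval p) - int (fibval q)"
  define u where "u = int (fsh p) - int (fsh q)"
  have h1: "\<bar>real_of_int a - phi * real_of_int u\<bar> < 2 * phi"
  proof -
    have "real_of_int a - phi * real_of_int u = (real (fibval p) - phi * real (fsh p)) - (real (fibval q) - phi * real (fsh q))"
      unfolding a_def u_def by (simp add: algebra_simps)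
    then show ?thesis using E_bound[of p] E_bound[of q] by linarith
  qed
  have xs: "x = p @ w" "y = q @ w'" unfolding p_q_w_w'_def by simp_all
  have fx: "fibval x = fibval p * fib (m + 1) + fsh p * fib m + fibval w"
    using fibval_append[of p w] xs lw by simp
  have fy: "fibval y = fibval q * fib (m + 1) + fsh q * fib m + fibval w'"
    using fibval_append[of q w'] xs lw by simp
  have bw: "fibval w < fib (m + 2)" "fibval w' < fib (m + 2)"
    using fibval_bound[OF valid_drop[OF vx, of k]] fibval_bound[OF valid_drop[OF vy, of k]] lw
    unfolding p_q_w_w'_def by auto
  have "real c = real (fibval x) - real (fibval y)" using eq by linarith
  then have "real c - (a * fib (m + 1) + u * fib m) = real (fibval w) - real (fibval w')"
    unfolding fx fy a_def u_def by (simp add: algebra_simps)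
  then have h2: "\<bar>real c - (a * fib (m + 1) + u * fib m)\<bar> < fib (m + 2)"
    using bw by simp linarith?
  have "(a, u) \<in> TT c"
    by (rule in_TT[OF box_bound(1)[OF h1 h2] box_bound(2)[OF h1 h2]])
  then show ?thesis using st unfolding a_def u_def by simp
qed

theorem theorem6:
  shows "\<exists>K::real. \<forall>c::nat. \<exists>A. wf_dfa A \<and>
           real (card (states A)) \<le> K * max 1 (ln (real c)) \<and>
           (\<forall>x y. valid_fib x \<longrightarrow> valid_fib y \<longrightarrow> length x = length y \<longrightarrow>
              (accepts A (zip x y) \<longleftrightarrow> int (fibval x) - int c = int (fibval y)))"
proof (intro exI allI)
  fix c :: nat
  let ?A = "aut c"
  have wf: "wf_dfa ?A"
    unfolding wf_dfa_def using finite_TT[of c] zero_TT[of c]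
    by (auto simp: aut_def split: if_splits)
  have "card (states ?A) \<le> card (TT c)"
    unfolding aut_def using finite_TT by (simp add: card_image_le)
  also have "\<dots> \<le> 99 * (Mc c + 1)" by (rule card_TT)
  finally have "real (card (states ?A)) \<le> real (99 * (Mc c + 1))" by linarith
  also have "\<dots> \<le> 800 * max 1 (ln (real c))" by (rule Mc_bound)
  finally have cd: "real (card (states ?A)) \<le> 800 * max 1 (ln (real c))" .
  have acc: "accepts ?A (zip x y) \<longleftrightarrow> int (fibval x) - int c = int (fibval y)"
    if vx: "valid_fib x" and vy: "valid_fib y" and len: "length x = length y" for x y
  proof
    assume "accepts ?A (zip x y)"
    then obtain q where r: "run ?A (enc (0, 0)) (zip x y) = Some q" and qf: "q \<in> final ?A"
      unfolding accepts_def by (auto simp: aut_def)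
    have "q = enc (foldl step (0, 0) (zip x y))" using r unfolding run_aut by (auto split: if_splits)
    then obtain s where "s \<in> TT c" "fst s = int c" "enc s = enc (foldl step (0, 0) (zip x y))"
      using qf by (auto simp: aut_def)
    then have "fst (foldl step (0, 0) (zip x y)) = int c" using inj_enc by (metis dec_enc)
    then show "int (fibval x) - int c = int (fibval y)" using foldl_step[OF len] by simp
  next
    assume eq: "int (fibval x) - int c = int (fibval y)"
    have ok: "okp c (0, 0) (zip x y)"
      by (rule okp_intro) (use prefix_in_TT[OF vx vy len eq] len in simp)
    have fin: "foldl step (0, 0) (zip x y) \<in> TT c"
      using prefix_in_TT[OF vx vy len eq, of "length x"] by simp
    have "fst (foldl step (0, 0) (zip x y)) = int c" using foldl_step[OF len] eq by simp
    then have "enc (foldl step (0, 0) (zip x y)) \<in> final ?A" using fin by (auto simp: aut_def)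
    moreover have "run ?A (init ?A) (zip x y) = Some (enc (foldl step (0, 0) (zip x y)))"
      using ok run_aut[of c "(0, 0)"] by (simp add: aut_def)
    ultimately show "accepts ?A (zip x y)" unfolding accepts_def by blast
  qed
  show "wf_dfa ?A \<and> real (card (states ?A)) \<le> 800 * max 1 (ln (real c)) \<and>
           (\<forall>x y. valid_fib x \<longrightarrow> valid_fib y \<longrightarrow> length x = length y \<longrightarrow>
              (accepts ?A (zip x y) \<longleftrightarrow> int (fibval x) - int c = int (fibval y)))"
    using wf cd acc by blast
qed

end
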